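(* Let $n\ge 1$ and $G\in\mathcal{G}_{2n}$ with $F(G)=n-1$. Then $f(G)\geq \lfloor n/2\rfloor$.
   Context: All graphs are finite and simple. $\mathcal{G}_{2n}$ denotes the set of all graphs with $2n$ vertices that have a perfect matching. For a perfect matching $M$ of $G$, a forcing set of $M$ is a subset $S\subseteq M$ contained in no other perfect matching of $G$; $f(G,M)$ is the minimum size of a forcing set of $M$. $f(G)$ and $F(G)$ are the minimum and maximum of $f(G,M)$ over all perfect matchings $M$ of $G$. *)

theory Defs
  imports Main
begin

definition simple_graph :: "'a set \<Rightarrow> 'a set set \<Rightarrow> bool" where
  "simple_graph V E \<longleftrightarrow> finite V \<and> (\<forall>e\<in>E. e \<subseteq> V \<and> card e = 2)"

definition perfect_matching :: "'a set \<Rightarrow> 'a set set \<Rightarrow> 'a set set \<Rightarrow> bool" where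
  "perfect_matching V E M \<longleftrightarrow> M \<subseteq> E \<and> (\<forall>v\<in>V. \<exists>!e. e \<in> M \<and> v \<in> e)"

definition perfect_matchings :: "'a set \<Rightarrow> 'a set set \<Rightarrow> 'a set set set" where
  "perfect_matchings V E = {M. perfect_matching V E M}"

definition forcing_set :: "'a set \<Rightarrow> 'a set set \<Rightarrow> 'a set set \<Rightarrow> 'a set set \<Rightarrow> bool" where
  "forcing_set V E M S \<longleftrightarrow> S \<subseteq> M \<and>
     (\<forall>M'. perfect_matching V E M' \<and> S \<subseteq> M' \<longrightarrow> M' = M)"

definition forcing_number :: "'a set \<Rightarrow> 'a set set \<Rightarrow> 'a set set \<Rightarrow> nat" where
  "forcing_number V E M = Min {card S | S. forcing_set V E M S}"

definition min_forcing_number :: "'a set \<Rightarrow> 'a set set \<Rightarrow> nat" where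
  "min_forcing_number V E = Min (forcing_number V E ` perfect_matchings V E)"

definition max_forcing_number :: "'a set \<Rightarrow> 'a set set \<Rightarrow> nat" where
  "max_forcing_number V E = Max (forcing_number V E ` perfect_matchings V E)"

end

theory Submission imports Defs begin

lemma pm_uniq:
  assumes "perfect_matching V E M" "e \<in> M" "g \<in> M" "v \<in> e" "v \<in> g" "v \<in> V"
  shows "e = g"
  using assms unfolding perfect_matching_def by blast

lemma sg_edge:
  assumes "simple_graph V E" "e \<in> E"
  shows "e \<subseteq> V" "card e = 2"
  using assms unfolding simple_graph_def by auto

lemma sg_pair:
  assumes "simple_graph V E" "{x,y} \<in> E"
  shows "x \<in> V" "y \<in> V" "x \<noteq> y"
  using assms unfolding simple_graph_def by (auto simp: card_2_iff)

lemma pm_E: "perfect_matching V E M \<Longrightarrow> M \<subseteq> E"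
  unfolding perfect_matching_def by blast

lemma pm_partner:
  assumes sg: "simple_graph V E" and pm: "perfect_matching V E M" and v: "v \<in> V"
  shows "\<exists>w. {v,w} \<in> M \<and> w \<noteq> v \<and> w \<in> V"
proof -
  obtain e where e: "e \<in> M" "v \<in> e" using pm v unfolding perfect_matching_def by blast
  have "e \<in> E" using e pm_E[OF pm] by blast
  then have "card e = 2" "e \<subseteq> V" using sg_edge[OF sg] by auto
  then obtain x y where xy: "e = {x,y}" "x \<noteq> y" by (auto simp: card_2_iff)
  show ?thesis
  proof (cases "v = x")
    case True then show ?thesis using xy e \<open>e \<subseteq> V\<close> by auto
  next
    case False then have "v = y" using xy e by auto
    then show ?thesis using xy e \<open>e \<subseteq> V\<close> by (auto simp: insert_commute)
  qed
qed

lemma pm_subset_eq: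
  assumes sg: "simple_graph V E" and p1: "perfect_matching V E M1"
    and p2: "perfect_matching V E M2" and sub: "M1 \<subseteq> M2"
  shows "M1 = M2"
proof
  show "M2 \<subseteq> M1"
  proof
    fix g assume g: "g \<in> M2"
    then have "g \<in> E" using pm_E[OF p2] by blast
    then have "card g = 2" "g \<subseteq> V" using sg_edge[OF sg] by auto
    then obtain v where v: "v \<in> g" by (auto simp: card_2_iff)
    with \<open>g \<subseteq> V\<close> have vV: "v \<in> V" by auto
    obtain e where e: "e \<in> M1" "v \<in> e" using p1 vV unfolding perfect_matching_def by blast
    have "e = g" using pm_uniq[OF p2 _ g e(2) v vV] e sub by blast
    then show "g \<in> M1" using e by simp
  qed
qed (rule sub)

lemma swap_gen:
  assumes sg: "simple_graph V E" and pm: "perfect_matching V E M" and KM: "K \<subseteq> M"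
    and K'E: "K' \<subseteq> E" and U: "\<Union>K' = \<Union>K"
    and dj: "\<forall>x\<in>K'. \<forall>y\<in>K'. x \<noteq> y \<longrightarrow> x \<inter> y = {}" and nK: "\<not> K' \<subseteq> M"
  shows "perfect_matching V E ((M-K)\<union>K') \<and> (M-K)\<union>K' \<noteq> M"
proof
  have ME: "M \<subseteq> E" using pm_E[OF pm] .
  show "perfect_matching V E ((M-K)\<union>K')"
    unfolding perfect_matching_def
  proof (intro conjI ballI)
    show "M - K \<union> K' \<subseteq> E" using ME K'E by blast
  next
    fix v assume vV: "v \<in> V"
    show "\<exists>!e. e \<in> M - K \<union> K' \<and> v \<in> e"
    proof (cases "v \<in> \<Union>K")
      case True
      then obtain k where k: "k \<in> K" "v \<in> k" by blast
      from True U obtain e where e: "e \<in> K'" "v \<in> e" by blast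
      show ?thesis
      proof (rule ex1I[of _ e])
        show "e \<in> M - K \<union> K' \<and> v \<in> e" using e by blast
      next
        fix g assume g: "g \<in> M - K \<union> K' \<and> v \<in> g"
        show "g = e"
        proof (cases "g \<in> K'")
          case True then show ?thesis using dj e g by blast
        next
          case False
          then have "g \<in> M" "g \<notin> K" using g by auto
          moreover have "g = k" using pm_uniq[OF pm \<open>g \<in> M\<close> _ _ k(2) vV] k KM g by blast
          ultimately show ?thesis using k by simp
        qed
      qed
    next
      case False
      obtain e where e: "e \<in> M" "v \<in> e" using pm vV unfolding perfect_matching_def by blast
      have eK: "e \<notin> K" using False e by blast
      show ?thesis
      proof (rule ex1I[of _ e])
        show "e \<in> M - K \<union> K' \<and> v \<in> e" using e eK by blast
      next
        fix g assume g: "g \<in> M - K \<union> K' \<and> v \<in> g"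
        then have "g \<notin> K'" using False U by blast
        then have "g \<in> M" using g by blast
        then show "g = e" using pm_uniq[OF pm _ e(1) _ e(2) vV] g by blast
      qed
    qed
  qed
  show "M - K \<union> K' \<noteq> M" using nK by blast
qed

definition goodswap :: "'a set \<Rightarrow> 'a set set \<Rightarrow> 'a set set \<Rightarrow> 'a \<Rightarrow> 'a \<Rightarrow> 'a \<Rightarrow> 'a \<Rightarrow> bool" where
  "goodswap V E M a b c d \<longleftrightarrow> (\<exists>M'. perfect_matching V E M' \<and> M' \<noteq> M \<and>
     (\<forall>g\<in>M. a \<notin> g \<and> b \<notin> g \<and> c \<notin> g \<and> d \<notin> g \<longrightarrow> g \<in> M'))"

lemma swap2:
  assumes sg: "simple_graph V E" and pm: "perfect_matching V E M"
    and m1: "{x1,y1} \<in> M" and m2: "{x2,y2} \<in> M"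
    and d: "x1 \<noteq> x2" "x1 \<noteq> y2" "y1 \<noteq> x2" "y1 \<noteq> y2"
    and n1: "{y1,x2} \<in> E" and n2: "{y2,x1} \<in> E"
  shows "\<exists>M'. perfect_matching V E M' \<and> M' \<noteq> M \<and>
     (\<forall>g\<in>M. g \<noteq> {x1,y1} \<and> g \<noteq> {x2,y2} \<longrightarrow> g \<in> M')"
proof -
  have ME: "M \<subseteq> E" using pm_E[OF pm] .
  have x1y1: "x1 \<noteq> y1" "y1 \<in> V" using sg_pair[OF sg, of x1 y1] m1 ME by auto
  have x2y2: "x2 \<noteq> y2" using sg_pair[OF sg, of x2 y2] m2 ME by auto
  have nm: "{y1,x2} \<notin> M"
  proof
    assume "{y1,x2} \<in> M"
    then have "{y1,x2} = {x1,y1}" using pm_uniq[OF pm _ m1, of "{y1,x2}" y1] x1y1 by auto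
    then show False using d x1y1 by (auto simp: doubleton_eq_iff)
  qed
  let ?K = "{{x1,y1},{x2,y2}}" and ?K' = "{{y1,x2},{y2,x1}}"
  have r: "perfect_matching V E ((M-?K)\<union>?K') \<and> (M-?K)\<union>?K' \<noteq> M"
    apply (rule swap_gen[OF sg pm])
    using m1 m2 n1 n2 nm d x1y1 x2y2 by auto
  show ?thesis
    apply (rule exI[of _ "(M-?K)\<union>?K'"])
    using r by auto
qed

lemma swap3:
  assumes sg: "simple_graph V E" and pm: "perfect_matching V E M"
    and m1: "{x1,y1} \<in> M" and m2: "{x2,y2} \<in> M" and m3: "{x3,y3} \<in> M"
    and d: "distinct [x1,y1,x2,y2,x3,y3]"
    and n1: "{y1,x2} \<in> E" and n2: "{y2,x3} \<in> E" and n3: "{y3,x1} \<in> E"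
  shows "\<exists>M'. perfect_matching V E M' \<and> M' \<noteq> M \<and>
     (\<forall>g\<in>M. g \<noteq> {x1,y1} \<and> g \<noteq> {x2,y2} \<and> g \<noteq> {x3,y3} \<longrightarrow> g \<in> M')"
proof -
  have ME: "M \<subseteq> E" using pm_E[OF pm] .
  have y1: "y1 \<in> V" using sg_pair[OF sg, of x1 y1] m1 ME by auto
  have nm: "{y1,x2} \<notin> M"
  proof
    assume "{y1,x2} \<in> M"
    then have "{y1,x2} = {x1,y1}" using pm_uniq[OF pm _ m1, of "{y1,x2}" y1] y1 by auto
    then show False using d by (auto simp: doubleton_eq_iff)
  qed
  let ?K = "{{x1,y1},{x2,y2},{x3,y3}}" and ?K' = "{{y1,x2},{y2,x3},{y3,x1}}"
  have r: "perfect_matching V E ((M-?K)\<union>?K') \<and> (M-?K)\<union>?K' \<noteq> M"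
    apply (rule swap_gen[OF sg pm])
    using m1 m2 m3 n1 n2 n3 nm d by auto
  show ?thesis
    apply (rule exI[of _ "(M-?K)\<union>?K'"])
    using r by auto
qed

lemma swap4:
  assumes sg: "simple_graph V E" and pm: "perfect_matching V E M"
    and m1: "{x1,y1} \<in> M" and m2: "{x2,y2} \<in> M" and m3: "{x3,y3} \<in> M" and m4: "{x4,y4} \<in> M"
    and d: "distinct [x1,y1,x2,y2,x3,y3,x4,y4]"
    and n1: "{y1,x2} \<in> E" and n2: "{y2,x3} \<in> E" and n3: "{y3,x4} \<in> E" and n4: "{y4,x1} \<in> E"
  shows "\<exists>M'. perfect_matching V E M' \<and> M' \<noteq> M \<and>
     (\<forall>g\<in>M. g \<noteq> {x1,y1} \<and> g \<noteq> {x2,y2} \<and> g \<noteq> {x3,y3} \<and> g \<noteq> {x4,y4} \<longrightarrow> g \<in> M')"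
proof -
  have ME: "M \<subseteq> E" using pm_E[OF pm] .
  have y1: "y1 \<in> V" using sg_pair[OF sg, of x1 y1] m1 ME by auto
  have nm: "{y1,x2} \<notin> M"
  proof
    assume "{y1,x2} \<in> M"
    then have "{y1,x2} = {x1,y1}" using pm_uniq[OF pm _ m1, of "{y1,x2}" y1] y1 by auto
    then show False using d by (auto simp: doubleton_eq_iff)
  qed
  let ?K = "{{x1,y1},{x2,y2},{x3,y3},{x4,y4}}" and ?K' = "{{y1,x2},{y2,x3},{y3,x4},{y4,x1}}"
  have r: "perfect_matching V E ((M-?K)\<union>?K') \<and> (M-?K)\<union>?K' \<noteq> M"
    apply (rule swap_gen[OF sg pm])
    using m1 m2 m3 m4 n1 n2 n3 n4 nm d by auto
  show ?thesis
    apply (rule exI[of _ "(M-?K)\<union>?K'"])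
    using r by auto
qed

lemma gs_intro:
  assumes "\<exists>M'. perfect_matching V E M' \<and> M' \<noteq> M \<and> (\<forall>g\<in>M. P g \<longrightarrow> g \<in> M')"
    and "\<And>g. a \<notin> g \<Longrightarrow> b \<notin> g \<Longrightarrow> c \<notin> g \<Longrightarrow> d \<notin> g \<Longrightarrow> P g"
  shows "goodswap V E M a b c d"
  using assms unfolding goodswap_def by metis

locale core =
  fixes V :: "'a set" and E M a b c d
  assumes sg: "simple_graph V E" and pm: "perfect_matching V E M"
    and inV: "a \<in> V" "b \<in> V" "c \<in> V" "d \<in> V"
    and dist: "a \<noteq> b" "a \<noteq> c" "a \<noteq> d" "b \<noteq> c" "b \<noteq> d" "c \<noteq> d"
    and Ed: "{a,b} \<in> E" "{c,d} \<in> E" "{a,c} \<in> E" "{b,d} \<in> E"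
    and Pe: "\<And>u. u \<in> V \<Longrightarrow> u \<noteq> a \<Longrightarrow> u \<noteq> b \<Longrightarrow> {u,a} \<in> E \<or> {u,b} \<in> E"
    and Pf: "\<And>u. u \<in> V \<Longrightarrow> u \<noteq> c \<Longrightarrow> u \<noteq> d \<Longrightarrow> {u,c} \<in> E \<or> {u,d} \<in> E"
begin

lemma uq: "{x,y} \<in> M \<Longrightarrow> {x,z} \<in> M \<Longrightarrow> x \<in> V \<Longrightarrow> y = z"
  using pm_uniq[OF pm, of "{x,y}" "{x,z}" x] by (auto simp: doubleton_eq_iff)

lemma partner: "x \<in> V \<Longrightarrow> \<exists>w. {x,w} \<in> M \<and> w \<noteq> x \<and> w \<in> V"
  using pm_partner[OF sg pm] by blast

lemmas sw2 = swap2[OF sg pm]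
lemmas sw3 = swap3[OF sg pm]
lemmas sw4 = swap4[OF sg pm]

lemma caseA:
  assumes ab: "{a,b} \<in> M"
  shows "goodswap V E M a b c d"
proof (cases "{c,d} \<in> M")
  case True
  show ?thesis
    apply (rule gs_intro[OF sw2[of a b d c]])
    using ab True dist Ed by (auto simp: insert_commute)
next
  case False
  obtain c' where c': "{c,c'} \<in> M" "c' \<noteq> c" "c' \<in> V" using partner inV by blast
  obtain d' where d': "{d,d'} \<in> M" "d' \<noteq> d" "d' \<in> V" using partner inV by blast
  have c'd: "c' \<noteq> d" using c' False by auto
  have c'a: "c' \<noteq> a" using uq[of a b c] ab c' inV dist by (auto simp: insert_commute)
  have c'b: "c' \<noteq> b" using uq[of b a c] ab c' inV dist by (auto simp: insert_commute)
  have d'c: "d' \<noteq> c" using d' False by (auto simp: insert_commute)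
  have d'a: "d' \<noteq> a" using uq[of a b d] ab d' inV dist by (auto simp: insert_commute)
  have d'b: "d' \<noteq> b" using uq[of b a d] ab d' inV dist by (auto simp: insert_commute)
  have c'd': "c' \<noteq> d'" using uq[of c' c d] c' d' dist by (auto simp: insert_commute)
  consider "{c',b} \<in> E" | "{d',a} \<in> E" | "{c',a} \<in> E" "{d',b} \<in> E"
    using Pe[of c'] Pe[of d'] c' d' c'a c'b d'a d'b by blast
  then show ?thesis
  proof cases
    case 1
    show ?thesis
      apply (rule gs_intro[OF sw2[of b a c c']])
      using ab c' 1 dist Ed c'a c'b c'd by (auto simp: insert_commute)
  next
    case 2
    show ?thesis
      apply (rule gs_intro[OF sw2[of a b d d']])
      using ab d' 2 dist Ed d'a d'b d'c by (auto simp: insert_commute)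
  next
    case 3
    show ?thesis
      apply (rule gs_intro[OF sw3[of a b d' d c c']])
      using ab c' d' 3 dist Ed c'a c'b c'd d'a d'b d'c c'd' by (auto simp: insert_commute)
  qed
qed

lemma caseB1:
  assumes ac: "{a,c} \<in> M"
  shows "goodswap V E M a b c d"
proof -
  obtain d' where d': "{d,d'} \<in> M" "d' \<noteq> d" "d' \<in> V" using partner inV by blast
  have d'a: "d' \<noteq> a" using uq[of a c d] ac d' inV dist by (auto simp: insert_commute)
  have d'c: "d' \<noteq> c" using uq[of c a d] ac d' inV dist by (auto simp: insert_commute)
  show ?thesis
  proof (cases "d' = b")
    case True
    show ?thesis
      apply (rule gs_intro[OF sw2[of a c d b]])
      using ac d' True dist Ed by (auto simp: insert_commute)
  next
    case d'b: False
    have "{d',a} \<in> E \<or> {d',b} \<in> E" using Pe[of d'] d' d'a d'b by blast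
    then show ?thesis
    proof
      assume h: "{d',a} \<in> E"
      show ?thesis
        apply (rule gs_intro[OF sw2[of a c d d']])
        using ac d' h dist Ed d'a d'b d'c by (auto simp: insert_commute)
    next
      assume h: "{d',b} \<in> E"
      obtain b' where b': "{b,b'} \<in> M" "b' \<noteq> b" "b' \<in> V" using partner inV by blast
      have b'a: "b' \<noteq> a" using uq[of a c b] ac b' inV dist by (auto simp: insert_commute)
      have b'c: "b' \<noteq> c" using uq[of c a b] ac b' inV dist by (auto simp: insert_commute)
      have b'd: "b' \<noteq> d" using uq[of d d' b] d' b' inV dist d'b by (auto simp: insert_commute)
      have b'd': "b' \<noteq> d'" using uq[of d' d b] d' b' dist by (auto simp: insert_commute)
      have "{b',c} \<in> E \<or> {b',d} \<in> E" using Pf[of b'] b' b'c b'd by blast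
      then show ?thesis
      proof
        assume h2: "{b',c} \<in> E"
        show ?thesis
          apply (rule gs_intro[OF sw2[of a c b' b]])
          using ac b' h2 dist Ed b'a b'c b'd by (auto simp: insert_commute)
      next
        assume h2: "{b',d} \<in> E"
        show ?thesis
          apply (rule gs_intro[OF sw2[of b b' d d']])
          using h b' d' h2 dist Ed b'a b'c b'd b'd' d'a d'b d'c by (auto simp: insert_commute)
      qed
    qed
  qed
qed

lemma caseB2:
  assumes ad: "{a,d} \<in> M"
  shows "goodswap V E M a b c d"
proof -
  obtain b' where b': "{b,b'} \<in> M" "b' \<noteq> b" "b' \<in> V" using partner inV by blast
  have b'a: "b' \<noteq> a" using uq[of a d b] ad b' inV dist by (auto simp: insert_commute)
  have b'd: "b' \<noteq> d" using uq[of d a b] ad b' inV dist by (auto simp: insert_commute)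
  show ?thesis
  proof (cases "b' = c")
    case True
    show ?thesis
      apply (rule gs_intro[OF sw2[of a d b c]])
      using ad b' True dist Ed by (auto simp: insert_commute)
  next
    case b'c: False
    have "{b',c} \<in> E \<or> {b',d} \<in> E" using Pf[of b'] b' b'c b'd by blast
    then show ?thesis
    proof
      assume h: "{b',d} \<in> E"
      show ?thesis
        apply (rule gs_intro[OF sw2[of a d b' b]])
        using ad b' h dist Ed b'a b'c b'd by (auto simp: insert_commute)
    next
      assume h: "{b',c} \<in> E"
      obtain c' where c': "{c,c'} \<in> M" "c' \<noteq> c" "c' \<in> V" using partner inV by blast
      have c'a: "c' \<noteq> a" using uq[of a d c] ad c' inV dist by (auto simp: insert_commute)
      have c'd: "c' \<noteq> d" using uq[of d a c] ad c' inV dist by (auto simp: insert_commute)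
      have c'b: "c' \<noteq> b" using uq[of b b' c] b' c' inV dist b'c by (auto simp: insert_commute)
      have c'b': "c' \<noteq> b'" using uq[of b' b c] b' c' dist by (auto simp: insert_commute)
      have "{c',a} \<in> E \<or> {c',b} \<in> E" using Pe[of c'] c' c'a c'b by blast
      then show ?thesis
      proof
        assume h2: "{c',a} \<in> E"
        show ?thesis
          apply (rule gs_intro[OF sw2[of a d c c']])
          using ad c' h2 dist Ed c'a c'b c'd by (auto simp: insert_commute)
      next
        assume h2: "{c',b} \<in> E"
        show ?thesis
          apply (rule gs_intro[OF sw2[of b b' c c']])
          using h b' c' h2 dist Ed b'a b'c b'd c'b' c'a c'b c'd by (auto simp: insert_commute)
      qed
    qed
  qed
qed

lemma caseB3:
  assumes n: "{a,b} \<notin> M" "{a,c} \<notin> M" "{a,d} \<notin> M" "{b,c} \<notin> M" "{b,d} \<notin> M" "{c,d} \<notin> M"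
  shows "goodswap V E M a b c d"
proof -
  obtain a' where a': "{a,a'} \<in> M" "a' \<noteq> a" "a' \<in> V" using partner inV by blast
  obtain b' where b': "{b,b'} \<in> M" "b' \<noteq> b" "b' \<in> V" using partner inV by blast
  obtain c' where c': "{c,c'} \<in> M" "c' \<noteq> c" "c' \<in> V" using partner inV by blast
  obtain d' where d': "{d,d'} \<in> M" "d' \<noteq> d" "d' \<in> V" using partner inV by blast
  have na: "a' \<noteq> b" "a' \<noteq> c" "a' \<noteq> d" using a' n by auto
  have nb: "b' \<noteq> a" "b' \<noteq> c" "b' \<noteq> d" using b' n by (auto simp: insert_commute)
  have nc: "c' \<noteq> a" "c' \<noteq> b" "c' \<noteq> d" using c' n by (auto simp: insert_commute)
  have nd: "d' \<noteq> a" "d' \<noteq> b" "d' \<noteq> c" using d' n by (auto simp: insert_commute)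
  have pp: "a' \<noteq> b'" "a' \<noteq> c'" "a' \<noteq> d'" "b' \<noteq> c'" "b' \<noteq> d'" "c' \<noteq> d'"
    using uq[of a' a b] uq[of a' a c] uq[of a' a d] uq[of b' b c] uq[of b' b d] uq[of c' c d]
      a' b' c' d' dist by (auto simp: insert_commute)
  note all = a' b' c' d' na nb nc nd pp dist Ed
  have A: "{a',c} \<in> E \<or> {a',d} \<in> E" using Pf[of a'] a' na by blast
  have B: "{b',c} \<in> E \<or> {b',d} \<in> E" using Pf[of b'] b' nb by blast
  have C: "{c',a} \<in> E \<or> {c',b} \<in> E" using Pe[of c'] c' nc by blast
  have D: "{d',a} \<in> E \<or> {d',b} \<in> E" using Pe[of d'] d' nd by blast
  have s_ac: ?thesis if "{a',c} \<in> E" "{c',a} \<in> E"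
    apply (rule gs_intro[OF sw2[of a a' c c']]) using that all by (auto simp: insert_commute)
  have s_ad: ?thesis if "{a',d} \<in> E" "{d',a} \<in> E"
    apply (rule gs_intro[OF sw2[of a a' d d']]) using that all by (auto simp: insert_commute)
  have s_bc: ?thesis if "{b',c} \<in> E" "{c',b} \<in> E"
    apply (rule gs_intro[OF sw2[of b b' c c']]) using that all by (auto simp: insert_commute)
  have s_bd: ?thesis if "{b',d} \<in> E" "{d',b} \<in> E"
    apply (rule gs_intro[OF sw2[of b b' d d']]) using that all by (auto simp: insert_commute)
  have s4a: ?thesis if "{a',c} \<in> E" "{c',b} \<in> E" "{b',d} \<in> E" "{d',a} \<in> E"
    apply (rule gs_intro[OF sw4[of a a' c c' b b' d d']]) using that all by (auto simp: insert_commute)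
  have s4b: ?thesis if "{a',d} \<in> E" "{d',b} \<in> E" "{b',c} \<in> E" "{c',a} \<in> E"
    apply (rule gs_intro[OF sw4[of a a' d d' b b' c c']]) using that all by (auto simp: insert_commute)
  show ?thesis using A B C D s_ac s_ad s_bc s_bd s4a s4b by blast
qed

end
lemma core_all:
  assumes "core V E M a b c d"
  shows "goodswap V E M a b c d"
proof -
  interpret core V E M a b c d by (rule assms)
  have s1: "core V E M c d a b"
    by (unfold_locales) (use sg pm inV dist Ed Pe Pf in \<open>auto simp: insert_commute\<close>)
  have s2: "core V E M b a d c"
    by (unfold_locales) (use sg pm inV dist Ed Pe Pf in \<open>auto simp: insert_commute\<close>)
  have g1: "goodswap V E M c d a b \<Longrightarrow> goodswap V E M a b c d"
    unfolding goodswap_def by blast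
  have g2: "goodswap V E M b a d c \<Longrightarrow> goodswap V E M a b c d"
    unfolding goodswap_def by blast
  show ?thesis
  proof (cases "{a,b} \<in> M")
    case True then show ?thesis by (rule caseA)
  next
    case F1: False
    show ?thesis
    proof (cases "{c,d} \<in> M")
      case True then show ?thesis using core.caseA[OF s1] g1 by blast
    next
      case F2: False
      show ?thesis
      proof (cases "{a,c} \<in> M")
        case True then show ?thesis by (rule caseB1)
      next
        case F3: False
        show ?thesis
        proof (cases "{b,d} \<in> M")
          case True then show ?thesis using core.caseB1[OF s2] g2 by blast
        next
          case F4: False
          show ?thesis
          proof (cases "{a,d} \<in> M")
            case True then show ?thesis by (rule caseB2)
          next
            case F5: False
            show ?thesis
            proof (cases "{b,c} \<in> M")
              case True then show ?thesis using core.caseB2[OF s2] g2 by (auto simp: insert_commute)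
            next
              case F6: False
              show ?thesis by (rule caseB3) (use F1 F2 F3 F4 F5 F6 in auto)
            qed
          qed
        qed
      qed
    qed
  qed
qed

lemma pm_card:
  assumes sg: "simple_graph V E" and pm: "perfect_matching V E M"
  shows "card V = 2 * card M" "finite M"
proof -
  have fV: "finite V" using sg unfolding simple_graph_def by blast
  have ME: "M \<subseteq> E" using pm_E[OF pm] .
  have EP: "E \<subseteq> Pow V" using sg unfolding simple_graph_def by blast
  show fM: "finite M" using ME EP fV by (meson finite_Pow_iff finite_subset)
  have VU: "V = \<Union>M"
  proof
    show "V \<subseteq> \<Union>M" using pm unfolding perfect_matching_def by blast
    show "\<Union>M \<subseteq> V" using ME EP by blast
  qed
  have pw: "pairwise disjnt M"
    unfolding pairwise_def disjnt_def
  proof (intro ballI impI)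
    fix e g assume e: "e \<in> M" and g: "g \<in> M" and ne: "e \<noteq> g"
    show "e \<inter> g = {}"
    proof (rule ccontr)
      assume "e \<inter> g \<noteq> {}"
      then obtain v where "v \<in> e" "v \<in> g" by blast
      moreover have "v \<in> V" using \<open>v \<in> e\<close> e VU by blast
      ultimately show False using pm_uniq[OF pm e g] ne by blast
    qed
  qed
  have c2: "\<And>e. e \<in> M \<Longrightarrow> card e = 2" using ME sg_edge[OF sg] by blast
  have "card V = sum card M"
    unfolding VU by (rule card_Union_disjoint[OF pw]) (use c2 in \<open>auto intro: card_ge_0_finite\<close>)
  also have "\<dots> = sum (\<lambda>_. 2) M" using c2 by (rule sum.cong[OF refl])
  finally show "card V = 2 * card M" by simp
qed

lemma fn_facts:
  assumes sg: "simple_graph V E" and pm: "perfect_matching V E M"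
  shows "\<exists>S. forcing_set V E M S \<and> card S = forcing_number V E M"
    "\<And>S. forcing_set V E M S \<Longrightarrow> forcing_number V E M \<le> card S"
proof -
  let ?A = "{card S | S. forcing_set V E M S}"
  have fM: "finite M" using pm_card[OF sg pm] by blast
  have "?A \<subseteq> card ` Pow M" unfolding forcing_set_def by auto
  then have fA: "finite ?A" using fM by (meson finite_Pow_iff finite_imageI finite_subset)
  have "forcing_set V E M M"
    unfolding forcing_set_def using pm_subset_eq[OF sg pm] by blast
  then have neA: "?A \<noteq> {}" by blast
  show "\<exists>S. forcing_set V E M S \<and> card S = forcing_number V E M"
    using Min_in[OF fA neA] unfolding forcing_number_def by auto
  fix S assume "forcing_set V E M S"
  then show "forcing_number V E M \<le> card S"
    unfolding forcing_number_def using fA by (auto intro: Min_le)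
qed

lemma cross:
  assumes sg: "simple_graph V E" and pm: "perfect_matching V E M0" and cM: "card M0 = n"
    and big: "\<And>S. forcing_set V E M0 S \<Longrightarrow> n - 1 \<le> card S"
    and e: "{a,b} \<in> M0" and f: "{c,d} \<in> M0" and ne: "{a,b} \<noteq> {c,d}"
  shows "({a,c} \<in> E \<and> {b,d} \<in> E) \<or> ({a,d} \<in> E \<and> {b,c} \<in> E)"
proof -
  have fM: "finite M0" using pm_card[OF sg pm] by blast
  have ME: "M0 \<subseteq> E" using pm_E[OF pm] .
  have ab: "a \<noteq> b" "a \<in> V" "b \<in> V" using sg_pair[OF sg, of a b] e ME by auto
  have cd: "c \<noteq> d" "c \<in> V" "d \<in> V" using sg_pair[OF sg, of c d] f ME by auto
  have dj: "a \<noteq> c" "a \<noteq> d" "b \<noteq> c" "b \<noteq> d"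
    using pm_uniq[OF pm e f] ne ab cd by auto
  define S0 where "S0 = M0 - {{a,b},{c,d}}"
  have "card S0 = n - 2" unfolding S0_def using fM e f ne cM
    by (simp add: card_Diff_subset)
  moreover have "2 \<le> n"
  proof -
    have "{{a,b},{c,d}} \<subseteq> M0" using e f by blast
    then have "card {{a,b},{c,d}} \<le> card M0" using fM by (rule card_mono[rotated])
    then show ?thesis using ne cM by simp
  qed
  ultimately have "\<not> forcing_set V E M0 S0" using big by fastforce
  then obtain M'' where M'': "perfect_matching V E M''" "S0 \<subseteq> M''" "M'' \<noteq> M0"
    unfolding forcing_set_def S0_def by blast
  have uq2: "\<And>x y z. {x,y} \<in> M'' \<Longrightarrow> {x,z} \<in> M'' \<Longrightarrow> x \<in> V \<Longrightarrow> y = z"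
    using pm_uniq[OF M''(1)] by (metis doubleton_eq_iff insertI1)
  have uq0: "\<And>x y z. {x,y} \<in> M0 \<Longrightarrow> {x,z} \<in> M0 \<Longrightarrow> x \<in> V \<Longrightarrow> y = z"
    using pm_uniq[OF pm] by (metis doubleton_eq_iff insertI1)
  have key: "y \<in> {a,b,c,d}" if x: "x \<in> {a,b,c,d}" and xy: "{x,y} \<in> M''" for x y
  proof -
    have yV: "y \<in> V" using sg_pair[OF sg, of x y] xy pm_E[OF M''(1)] by auto
    have xyne: "x \<noteq> y" using sg_pair[OF sg, of x y] xy pm_E[OF M''(1)] by auto
    obtain w where w: "{y,w} \<in> M0" using pm_partner[OF sg pm yV] by blast
    show ?thesis
    proof (rule ccontr)
      assume ny: "y \<notin> {a,b,c,d}"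
      then have "{y,w} \<in> S0" using w unfolding S0_def by auto
      then have "{y,w} \<in> M''" using M''(2) by blast
      then have "w = x" using uq2[of y w x] xy yV by (simp add: insert_commute)
      then have yx0: "{x,y} \<in> M0" using w by (simp add: insert_commute)
      have xV: "x \<in> V" using x ab cd by auto
      have "y \<in> {a,b,c,d}"
      proof -
        consider "x = a" | "x = b" | "x = c" | "x = d" using x by blast
        then show ?thesis
        proof cases
          case 1 then show ?thesis using uq0[of a y b] yx0 e ab by auto
        next
          case 2 then show ?thesis using uq0[of b y a] yx0 e ab by (auto simp: insert_commute)
        next
          case 3 then show ?thesis using uq0[of c y d] yx0 f cd by auto
        next
          case 4 then show ?thesis using uq0[of d y c] yx0 f cd by (auto simp: insert_commute)
        qed
      qed
      then show False using ny by blast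
    qed
  qed
  obtain pa where pa: "{a,pa} \<in> M''" using pm_partner[OF sg M''(1) ab(2)] by blast
  obtain pb where pb: "{b,pb} \<in> M''" using pm_partner[OF sg M''(1) ab(3)] by blast
  obtain pc where pc: "{c,pc} \<in> M''" using pm_partner[OF sg M''(1) cd(2)] by blast
  have npa: "pa \<noteq> a" using pa sg_pair[OF sg, of a pa] pm_E[OF M''(1)] by auto
  have npb: "pb \<noteq> b" using pb sg_pair[OF sg, of b pb] pm_E[OF M''(1)] by auto
  have npc: "pc \<noteq> c" using pc sg_pair[OF sg, of c pc] pm_E[OF M''(1)] by auto
  have kpa: "pa \<in> {a,b,c,d}" using key[OF _ pa] by simp
  have kpb: "pb \<in> {a,b,c,d}" using key[OF _ pb] by simp
  have kpc: "pc \<in> {a,b,c,d}" using key[OF _ pc] by simp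
  have M''E: "M'' \<subseteq> E" using pm_E[OF M''(1)] .
  consider "pa = b" | "pa = c" | "pa = d" using kpa npa by blast
  then show ?thesis
  proof cases
    case 1
    have "pc \<noteq> a" using uq2[of a pa c] pa pc 1 ab dj by (auto simp: insert_commute)
    moreover have "pc \<noteq> b" using uq2[of b a c] pa pc 1 ab dj by (auto simp: insert_commute)
    ultimately have "pc = d" using kpc npc by blast
    then have "M0 \<subseteq> M''" using M''(2) pa pc 1 unfolding S0_def by blast
    then show ?thesis using pm_subset_eq[OF sg pm M''(1)] M''(3) by blast
  next
    case 2
    have "pb \<noteq> a" using uq2[of a c b] pa pb 2 ab dj by (auto simp: insert_commute)
    moreover have "pb \<noteq> c" using uq2[of c a b] pa pb 2 ab cd dj by (auto simp: insert_commute)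
    ultimately have "pb = d" using kpb npb by blast
    then show ?thesis using pa pb 2 M''E by blast
  next
    case 3
    have "pb \<noteq> a" using uq2[of a d b] pa pb 3 ab dj by (auto simp: insert_commute)
    moreover have "pb \<noteq> d" using uq2[of d a b] pa pb 3 ab cd dj by (auto simp: insert_commute)
    ultimately have "pb = c" using kpb npb by blast
    then show ?thesis using pa pb 3 M''E by (auto simp: insert_commute)
  qed
qed

theorem corollary5p2:
  fixes V :: "'a set" and E :: "'a set set" and n :: nat
  assumes "n \<ge> 1"
    and "simple_graph V E"
    and "card V = 2 * n"
    and "perfect_matchings V E \<noteq> {}"
    and "max_forcing_number V E = n - 1"
  shows "min_forcing_number V E \<ge> n div 2"
proof -
  note sg = assms(2)
  let ?P = "perfect_matchings V E"
  let ?fn = "forcing_number V E"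
  have fV: "finite V" using sg unfolding simple_graph_def by blast
  have EP: "E \<subseteq> Pow V" using sg unfolding simple_graph_def by blast
  have fE: "finite E" using EP fV by (meson finite_Pow_iff finite_subset)
  have "?P \<subseteq> Pow E" unfolding perfect_matchings_def perfect_matching_def by auto
  then have fP: "finite ?P" using fE by (meson finite_Pow_iff finite_subset)
  have fimg: "finite (?fn ` ?P)" "?fn ` ?P \<noteq> {}" using fP assms(4) by auto
  obtain M0 where M0: "M0 \<in> ?P" "?fn M0 = n - 1"
    using Max_in[OF fimg] assms(5) unfolding max_forcing_number_def by auto
  obtain M' where M': "M' \<in> ?P" "?fn M' = min_forcing_number V E"
    using Min_in[OF fimg] unfolding min_forcing_number_def by auto
  have pm0: "perfect_matching V E M0" using M0 unfolding perfect_matchings_def by auto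
  have pm': "perfect_matching V E M'" using M' unfolding perfect_matchings_def by auto
  obtain S where S: "forcing_set V E M' S" "card S = ?fn M'" using fn_facts(1)[OF sg pm'] by blast
  have cM0: "card M0 = n" using pm_card[OF sg pm0] assms(3) by simp
  have fM0: "finite M0" using pm_card[OF sg pm0] by simp
  have big: "\<And>S. forcing_set V E M0 S \<Longrightarrow> n - 1 \<le> card S" using fn_facts(2)[OF sg pm0] M0 by simp
  have ME0: "M0 \<subseteq> E" using pm_E[OF pm0] .
  have ME': "M' \<subseteq> E" using pm_E[OF pm'] .
  have SM': "S \<subseteq> M'" using S unfolding forcing_set_def by blast
  have "n div 2 \<le> card S"
  proof (rule ccontr)
    assume "\<not> n div 2 \<le> card S"
    then have small: "card S < n div 2" by simp
    define T where "T = {g \<in> M0. g \<inter> \<Union>S = {}}"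
    have US: "\<Union>S \<subseteq> V" using SM' ME' EP by blast
    have fUS: "finite (\<Union>S)" using US fV by (rule finite_subset)
    define h where "h g = (SOME v. v \<in> g \<inter> \<Union>S)" for g
    have h: "h g \<in> g \<inter> \<Union>S" if "g \<in> M0 - T" for g
    proof -
      have "g \<inter> \<Union>S \<noteq> {}" using that unfolding T_def by blast
      then show ?thesis unfolding h_def by (meson ex_in_conv someI_ex)
    qed
    have inj: "inj_on h (M0 - T)"
    proof (rule inj_onI)
      fix g1 g2 assume g: "g1 \<in> M0 - T" "g2 \<in> M0 - T" "h g1 = h g2"
      then have "h g1 \<in> g1" "h g1 \<in> g2" "h g1 \<in> V" using h[of g1] h[of g2] US by auto
      then show "g1 = g2" using pm_uniq[OF pm0, of g1 g2] g by blast
    qed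
    have "card (M0 - T) \<le> card (\<Union>S)"
      by (rule card_inj_on_le[OF inj _ fUS]) (use h in blast)
    also have "\<dots> \<le> sum card S" by (rule card_Union_le_sum_card)
    also have "\<dots> = sum (\<lambda>_. 2) S"
      by (rule sum.cong[OF refl]) (use SM' ME' sg_edge[OF sg] in blast)
    also have "\<dots> = 2 * card S" by simp
    finally have c1: "card (M0 - T) \<le> 2 * card S" .
    have TM: "T \<subseteq> M0" unfolding T_def by blast
    have "card (M0 - T) = card M0 - card T" using TM fM0 by (meson card_Diff_subset finite_subset)
    moreover have "card T \<le> card M0" using TM fM0 by (rule card_mono[rotated])
    ultimately have "2 \<le> card T" using c1 cM0 small by linarith
    then have "T \<noteq> {}" by auto
    then obtain e where e: "e \<in> T" by blast
    have fT: "finite T" using TM fM0 by (rule finite_subset)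
    have "card (T - {e}) \<ge> 1" using \<open>2 \<le> card T\<close> e fT by (simp add: card_Diff_singleton)
    then have "T - {e} \<noteq> {}" by (metis card.empty not_one_le_zero)
    then obtain f where f: "f \<in> T" "f \<noteq> e" by blast
    have ef: "e \<in> T" "f \<in> T" "e \<noteq> f" using e f by auto
    have eM: "e \<in> M0" "f \<in> M0" using ef TM by auto
    have "card e = 2" "card f = 2" using eM ME0 sg_edge(2)[OF sg] by auto
    then obtain a b c0 d0 where ab: "e = {a,b}" "a \<noteq> b" and cd0: "f = {c0,d0}" "c0 \<noteq> d0"
      unfolding card_2_iff by blast
    have abV: "a \<in> V" "b \<in> V" using eM ME0 EP ab by auto
    have crossA: "{u,a} \<in> E \<or> {u,b} \<in> E" if uu: "u \<in> V" "u \<noteq> a" "u \<noteq> b" for u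
    proof -
      obtain w where w: "{u,w} \<in> M0" using pm_partner[OF sg pm0 uu(1)] by blast
      have "{a,b} \<noteq> {u,w}" using uu by (auto simp: doubleton_eq_iff)
      then have "({a,u} \<in> E \<and> {b,w} \<in> E) \<or> ({a,w} \<in> E \<and> {b,u} \<in> E)"
        using cross[OF sg pm0 cM0 big _ w, of a b] eM ab by blast
      then show ?thesis by (metis insert_commute)
    qed
    have H: False if cd: "f = {c,d}" "c \<noteq> d" and ac: "{a,c} \<in> E" and bd: "{b,d} \<in> E" for c d
    proof -
      have cdV: "c \<in> V" "d \<in> V" using eM ME0 EP cd by auto
      have dj: "a \<noteq> c" "a \<noteq> d" "b \<noteq> c" "b \<noteq> d"
        using pm_uniq[OF pm0 eM(1) eM(2)] ef(3) ab cd abV by auto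
      have crossB: "{u,c} \<in> E \<or> {u,d} \<in> E" if uu: "u \<in> V" "u \<noteq> c" "u \<noteq> d" for u
      proof -
        obtain w where w: "{u,w} \<in> M0" using pm_partner[OF sg pm0 uu(1)] by blast
        have "{c,d} \<noteq> {u,w}" using uu by (auto simp: doubleton_eq_iff)
        then have "({c,u} \<in> E \<and> {d,w} \<in> E) \<or> ({c,w} \<in> E \<and> {d,u} \<in> E)"
          using cross[OF sg pm0 cM0 big _ w, of c d] eM cd by blast
        then show ?thesis by (metis insert_commute)
      qed
      have Eab: "{a,b} \<in> E" "{c,d} \<in> E" using eM ME0 ab cd by auto
      have "core V E M' a b c d"
        unfolding core_def using sg pm' abV cdV ab(2) cd(2) dj ac bd Eab crossA crossB by blast
      then have "goodswap V E M' a b c d" by (rule core_all)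
      then obtain M'' where M'': "perfect_matching V E M''" "M'' \<noteq> M'"
        "\<forall>g\<in>M'. a \<notin> g \<and> b \<notin> g \<and> c \<notin> g \<and> d \<notin> g \<longrightarrow> g \<in> M''"
        unfolding goodswap_def by blast
      have "e \<inter> \<Union>S = {}" "f \<inter> \<Union>S = {}" using ef unfolding T_def by auto
      then have "a \<notin> \<Union>S" "b \<notin> \<Union>S" "c \<notin> \<Union>S" "d \<notin> \<Union>S" using ab cd by auto
      then have "S \<subseteq> M''" using M''(3) SM' by blast
      then show False using S(1) M''(1,2) unfolding forcing_set_def by blast
    qed
    have "({a,c0} \<in> E \<and> {b,d0} \<in> E) \<or> ({a,d0} \<in> E \<and> {b,c0} \<in> E)"
      using cross[OF sg pm0 cM0 big, of a b c0 d0] eM ab cd0 ef(3) by blast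
    moreover have "f = {d0,c0}" using cd0 by (simp add: insert_commute)
    ultimately show False using H[of c0 d0] H[of d0 c0] cd0 by blast
  qed
  then show ?thesis using S M' by simp
qed

end
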